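(* Let $G$ be a finite group. Then $G$ contains an element whose order is a composite number if and only if $g(OD(G))=3$.
   Context: For a finite group $G$, $o(x)$ denotes the order of $x\in G$. The order-divisor graph $OD(G)$ is the simple undirected graph with vertex set $G$, in which two distinct vertices $x,y$ are adjacent if and only if $o(x)\neq o(y)$ and either $o(x)\mid o(y)$ or $o(y)\mid o(x)$. The girth $g(\Gamma)$ of a graph $\Gamma$ is the length of a shortest cycle in $\Gamma$ (taken to be $0$ if $\Gamma$ has no cycle). *)

theory Defs
  imports "HOL-Algebra.Multiplicative_Group" "HOL-Computational_Algebra.Primes"
begin

definition is_cycle :: "'a set \<Rightarrow> ('a \<Rightarrow> 'a \<Rightarrow> bool) \<Rightarrow> 'a list \<Rightarrow> bool" where
  "is_cycle V E vs \<longleftrightarrow> length vs \<ge> 3 \<and> distinct vs \<and> set vs \<subseteq> V \<and>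
     (\<forall>i < length vs. E (vs ! i) (vs ! ((i + 1) mod length vs)))"

definition girth :: "'a set \<Rightarrow> ('a \<Rightarrow> 'a \<Rightarrow> bool) \<Rightarrow> nat" where
  "girth V E = (if \<exists>vs. is_cycle V E vs
                then (LEAST k. \<exists>vs. is_cycle V E vs \<and> length vs = k) else 0)"

definition od_adj :: "('a, 'b) monoid_scheme \<Rightarrow> 'a \<Rightarrow> 'a \<Rightarrow> bool" where
  "od_adj G x y \<longleftrightarrow> x \<noteq> y \<and> group.ord G x \<noteq> group.ord G y \<and>
     (group.ord G x dvd group.ord G y \<or> group.ord G y dvd group.ord G x)"

definition composite :: "nat \<Rightarrow> bool" where
  "composite n \<longleftrightarrow> n > 1 \<and> \<not> prime n"

end

theory Submission
  imports Defs
begin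

lemma cycle_ge3: "is_cycle V E vs \<Longrightarrow> length vs \<ge> 3"
  by (simp add: is_cycle_def)

lemma girth3_iff: "girth V E = 3 \<longleftrightarrow> (\<exists>vs. is_cycle V E vs \<and> length vs = 3)"
proof
  assume h: "girth V E = 3"
  then have ex: "\<exists>vs. is_cycle V E vs" unfolding girth_def by (auto split: if_splits)
  then obtain vs where "is_cycle V E vs" by blast
  then have "\<exists>k vs. is_cycle V E vs \<and> length vs = k" by blast
  from LeastI_ex[OF this] h ex show "\<exists>vs. is_cycle V E vs \<and> length vs = 3"
    unfolding girth_def by auto
next
  assume h: "\<exists>vs. is_cycle V E vs \<and> length vs = 3"
  have "(LEAST k. \<exists>vs. is_cycle V E vs \<and> length vs = k) = 3"
    by (rule Least_equality) (use h cycle_ge3 in auto)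
  then show "girth V E = 3" using h unfolding girth_def by auto
qed

lemma all3: "(\<forall>i<(3::nat). P i) \<longleftrightarrow> P 0 \<and> P 1 \<and> P 2"
proof
  assume "\<forall>i<(3::nat). P i" then show "P 0 \<and> P 1 \<and> P 2" by simp
next
  assume h: "P 0 \<and> P 1 \<and> P 2"
  show "\<forall>i<(3::nat). P i"
  proof (intro allI impI)
    fix i :: nat assume "i < 3"
    then have "i = 0 \<or> i = 1 \<or> i = 2" by linarith
    then show "P i" using h by blast
  qed
qed

lemma cyc3: "is_cycle V E [a,b,c] \<longleftrightarrow> distinct [a,b,c] \<and> {a,b,c} \<subseteq> V \<and> E a b \<and> E b c \<and> E c a"
proof -
  have l: "length [a,b,c] = 3" by simp
  show ?thesis unfolding is_cycle_def l all3 by simp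
qed

lemma len3: "length vs = 3 \<Longrightarrow> \<exists>a b c. vs = [a,b,c]"
proof -
  assume "length vs = 3"
  then show ?thesis by (cases vs; cases "tl vs"; cases "tl (tl vs)") auto
qed

lemma chain_composite:
  fixes a b c :: nat
  assumes "a > 0" "b > 0" "c > 0" "a \<noteq> b" "b \<noteq> c" "c \<noteq> a"
    "a dvd b \<or> b dvd a" "b dvd c \<or> c dvd b" "c dvd a \<or> a dvd c"
  shows "composite a \<or> composite b \<or> composite c"
proof -
  have key: "composite z" if H: "x > 0" "y > 0" "z > 0" "x \<noteq> y" "y \<noteq> z" "z \<noteq> x"
    "x dvd z" "y dvd z" for x y z :: nat
  proof -
    have "x \<le> z" "y \<le> z" using that by (auto intro: dvd_imp_le)
    then have xz: "x < z" and yz: "y < z" using that by auto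
    have "x \<noteq> 1 \<or> y \<noteq> 1" using that by auto
    then obtain d where d: "d dvd z" "1 < d" "d < z"
    proof
      assume "x \<noteq> 1" then show ?thesis using H(1,7) xz by (intro that) auto
    next
      assume "y \<noteq> 1" then show ?thesis using H(2,8) yz by (intro that) auto
    qed
    then show ?thesis unfolding composite_def prime_nat_iff by auto
  qed
  have kc: "composite c" if "a dvd c" "b dvd c" using key[of a b c] that assms by simp
  have kb: "composite b" if "a dvd b" "c dvd b" using key[of a c b] that assms by simp
  have ka: "composite a" if "b dvd a" "c dvd a" using key[of b c a] that assms by simp
  from assms(7-9) show ?thesis
  proof (elim disjE)
    assume h: "a dvd b" "b dvd c" "c dvd a"
    have "b dvd a" using h(2,3) by (rule dvd_trans)
    then have "a = b" using h(1) by (rule dvd_antisym[rotated])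
    with assms show ?thesis by simp
  next
    assume h: "b dvd a" "c dvd b" "a dvd c"
    have "a dvd b" using h(3,2) by (rule dvd_trans)
    then have "a = b" using h(1) by (rule dvd_antisym)
    with assms show ?thesis by simp
  next
    assume "a dvd b" "b dvd c" "a dvd c" then show ?thesis using kc by simp
  next
    assume "a dvd b" "c dvd b" "c dvd a" then show ?thesis using kb by simp
  next
    assume "a dvd b" "c dvd b" "a dvd c" then show ?thesis using kb by simp
  next
    assume "b dvd a" "b dvd c" "c dvd a" then show ?thesis using ka by simp
  next
    assume "b dvd a" "b dvd c" "a dvd c" then show ?thesis using kc by simp
  next
    assume "b dvd a" "c dvd b" "c dvd a" then show ?thesis using ka by simp
  qed
qed

theorem mainTheorem4:
  fixes G :: "('a, 'b) monoid_scheme"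
  assumes "group G" and "finite (carrier G)"
  shows "(\<exists>x \<in> carrier G. composite (group.ord G x)) \<longleftrightarrow> girth (carrier G) (od_adj G) = 3"
proof -
  interpret group G by fact
  note fin = assms(2)
  show ?thesis unfolding girth3_iff
  proof
    assume "\<exists>x \<in> carrier G. composite (ord x)"
    then obtain x where x: "x \<in> carrier G" "composite (ord x)" by blast
    define n where "n = ord x"
    have n1: "n > 1" and np: "\<not> prime n" using x unfolding composite_def n_def by auto
    obtain p where p: "prime p" "p dvd n" using n1 prime_factor_nat[of n] by auto
    have pn: "p \<noteq> n" using p np by auto
    have p1: "p > 1" using p prime_gt_1_nat by blast
    have pltn: "p < n" using dvd_imp_le[OF p(2)] n1 pn by linarith
    have ddvd: "n div p dvd n" using p(2) by (auto elim!: dvdE)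
    have dnz: "n div p \<noteq> 0" using pltn p1 by (simp add: div_eq_0_iff)
    define y where "y = x [^]\<^bsub>G\<^esub> (n div p)"
    have yc: "y \<in> carrier G" using x by (simp add: y_def)
    obtain k where k: "n = p * k" using p(2) by (auto elim!: dvdE)
    have kpos: "k > 0" using k n1 by (cases k) auto
    have nk: "n div p = k" using k p1 by simp
    have "n div k = p" using k kpos by simp
    then have oy: "ord y = p" unfolding y_def using ord_pow[OF x(1), folded n_def, OF ddvd dnz] nk
      by simp
    have o1: "ord \<one>\<^bsub>G\<^esub> = 1" by simp
    have "is_cycle (carrier G) (od_adj G) [\<one>\<^bsub>G\<^esub>, y, x]"
    proof -
      have d: "distinct [\<one>\<^bsub>G\<^esub>, y, x]" using oy o1 p1 pltn n_def by auto
      have e1: "od_adj G \<one>\<^bsub>G\<^esub> y" unfolding od_adj_def using oy o1 p1 d by simp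
      have e2: "od_adj G y x" unfolding od_adj_def using oy n_def p pltn d by auto
      have e3: "od_adj G x \<one>\<^bsub>G\<^esub>" unfolding od_adj_def using o1 n_def n1 d by auto
      show ?thesis unfolding cyc3 using d e1 e2 e3 yc x(1) by simp
    qed
    then show "\<exists>vs. is_cycle (carrier G) (od_adj G) vs \<and> length vs = 3" by force
  next
    assume "\<exists>vs. is_cycle (carrier G) (od_adj G) vs \<and> length vs = 3"
    then obtain a b c where "is_cycle (carrier G) (od_adj G) [a,b,c]" using len3 by blast
    then have h: "a \<in> carrier G" "b \<in> carrier G" "c \<in> carrier G" "od_adj G a b" "od_adj G b c" "od_adj G c a"
      unfolding cyc3 by auto
    have pos: "ord a > 0" "ord b > 0" "ord c > 0" using ord_ge_1[OF fin, of a] ord_ge_1[OF fin, of b] ord_ge_1[OF fin, of c] h by auto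
    have "composite (ord a) \<or> composite (ord b) \<or> composite (ord c)"
      using h(4-6) unfolding od_adj_def by (intro chain_composite[OF pos]) auto
    then show "\<exists>x \<in> carrier G. composite (ord x)" using h by blast
  qed
qed

end
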